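(* Let $d\ge7$, $\epsilon>0$ and $\Delta\ge\sqrt d\,\epsilon$. There exists a subset $\Theta\subseteq\{\Delta\}\times\{-\epsilon,\epsilon\}^{d-1}\subseteq\mathbb R^d$ of cardinality $|\Theta|\ge e^{(d-1)/8}\ge2$ such that for all $\theta\ne\theta'\in\Theta$, \[ \|\Phi_\theta-\Phi_{\theta'}\|_{L^1(Q_0)}\ge\frac{\sqrt{d-1}\,\epsilon}{4\pi\Delta}e^{-\Delta^2}. \]
   Context: $(\varphi_j)_{j\ge1}$ is an orthonormal basis of $\mathbb L^2([0,1])$. For $\theta\in\mathbb R^d$ let $f_\theta=\sum_{j=1}^d\theta_j\varphi_j$, and let $\Phi_\theta$ be the Bayes classifier of the model $Y\sim\mathrm{Bernoulli}(1/2)$, $dX(t)=Yf_\theta(t)\,dt+dW(t)$ (i.e. $f=f_\theta$, $g=0$, $W$ a standard Brownian motion independent of $Y$), namely $\Phi_\theta(x)=\mathbf 1\{\int_0^1f_\theta(t)\,dx(t)\ge\frac12\|\theta\|^2\}$ for continuous trajectories $x$. $Q_0$ is the law (Wiener measure) of a standard Brownian motion $W$ on $[0,1]$ and $\|h\|_{L^1(Q_0)}=\mathbb E|h(W)|$. *)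

theory Defs
  imports "HOL-Probability.Probability"
begin

definition L2_01 :: "(real \<Rightarrow> real) \<Rightarrow> bool" where
  "L2_01 f \<longleftrightarrow> f \<in> borel_measurable borel \<and> set_integrable lborel {0..1} (\<lambda>t. (f t)\<^sup>2)"

definition inner01 :: "(real \<Rightarrow> real) \<Rightarrow> (real \<Rightarrow> real) \<Rightarrow> real" where
  "inner01 f g = (LINT t:{0..1}|lborel. f t * g t)"

definition ONB_01 :: "(nat \<Rightarrow> real \<Rightarrow> real) \<Rightarrow> bool" where
  "ONB_01 \<phi> \<longleftrightarrow>
     (\<forall>j\<ge>1. L2_01 (\<phi> j)) \<and>
     (\<forall>i\<ge>1. \<forall>j\<ge>1. inner01 (\<phi> i) (\<phi> j) = (if i = j then 1 else 0)) \<and>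
     (\<forall>f. L2_01 f \<longrightarrow> (\<forall>j\<ge>1. inner01 f (\<phi> j) = 0) \<longrightarrow>
          (AE t in lborel. t \<in> {0..1} \<longrightarrow> f t = 0))"

(* Wiener integral of a standard Brownian motion W on [0,1] on the probability space M:
   I f = \<integral>_0^1 f(t) dW(t).  It is characterised (isonormal Gaussian process on L^2([0,1]))
   by a.s. linearity and I f ~ N(0, \<parallel>f\<parallel>^2). *)
definition wiener_integral :: "'a measure \<Rightarrow> ((real \<Rightarrow> real) \<Rightarrow> 'a \<Rightarrow> real) \<Rightarrow> bool" where
  "wiener_integral M I \<longleftrightarrow> prob_space M \<and>
     (\<forall>f. L2_01 f \<longrightarrow> I f \<in> borel_measurable M) \<and>
     (\<forall>f g a b. L2_01 f \<longrightarrow> L2_01 g \<longrightarrow>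
        (AE \<omega> in M. I (\<lambda>t. a * f t + b * g t) \<omega> = a * I f \<omega> + b * I g \<omega>)) \<and>
     (\<forall>f. L2_01 f \<longrightarrow> inner01 f f > 0 \<longrightarrow>
        distributed M lborel (I f) (normal_density 0 (sqrt (inner01 f f)))) \<and>
     (\<forall>f. L2_01 f \<longrightarrow> inner01 f f = 0 \<longrightarrow> (AE \<omega> in M. I f \<omega> = 0))"

(* f_theta = sum_{j=1}^d theta_j phi_j, theta \<in> R^d represented as nat \<Rightarrow> real on indices 1..d *)
definition f_theta :: "(nat \<Rightarrow> real \<Rightarrow> real) \<Rightarrow> nat \<Rightarrow> (nat \<Rightarrow> real) \<Rightarrow> real \<Rightarrow> real" where
  "f_theta \<phi> d \<theta> t = (\<Sum>j=1..d. \<theta> j * \<phi> j t)"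

definition sqnorm :: "nat \<Rightarrow> (nat \<Rightarrow> real) \<Rightarrow> real" where
  "sqnorm d \<theta> = (\<Sum>j=1..d. (\<theta> j)\<^sup>2)"

(* Bayes classifier Phi_theta evaluated at the Brownian path W(\<omega>):
   1{ \<integral> f_theta dW \<ge> \<parallel>theta\<parallel>^2/2 } *)
definition Phi_W :: "(nat \<Rightarrow> real \<Rightarrow> real) \<Rightarrow> nat \<Rightarrow> ((real \<Rightarrow> real) \<Rightarrow> 'a \<Rightarrow> real)
                      \<Rightarrow> (nat \<Rightarrow> real) \<Rightarrow> 'a \<Rightarrow> real" where
  "Phi_W \<phi> d I \<theta> \<omega> = (if I (f_theta \<phi> d \<theta>) \<omega> \<ge> sqnorm d \<theta> / 2 then 1 else 0)"

(* \<parallel>Phi_theta - Phi_theta'\<parallel>_{L^1(Q_0)} = E |Phi_theta(W) - Phi_theta'(W)| *)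
definition L1_Q0_dist :: "'a measure \<Rightarrow> (nat \<Rightarrow> real \<Rightarrow> real) \<Rightarrow> nat \<Rightarrow> ((real \<Rightarrow> real) \<Rightarrow> 'a \<Rightarrow> real)
                      \<Rightarrow> (nat \<Rightarrow> real) \<Rightarrow> (nat \<Rightarrow> real) \<Rightarrow> real" where
  "L1_Q0_dist M \<phi> d I \<theta> \<theta>' = (\<integral>\<omega>. \<bar>Phi_W \<phi> d I \<theta> \<omega> - Phi_W \<phi> d I \<theta>' \<omega>\<bar> \<partial>M)"

(* {Delta} x {-eps,eps}^{d-1} as vectors indexed 1..d (zero outside) *)
definition cube_set :: "nat \<Rightarrow> real \<Rightarrow> real \<Rightarrow> (nat \<Rightarrow> real) set" where
  "cube_set d \<Delta> \<epsilon> = {\<theta>. \<theta> 1 = \<Delta> \<and> (\<forall>j\<in>{2..d}. \<theta> j \<in> {-\<epsilon>, \<epsilon>}) \<and> (\<forall>j. j \<notin> {1..d} \<longrightarrow> \<theta> j = 0)}"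

end

theory Submission
  imports Defs
begin


lemma std_normal_by_char:
  fixes M :: "'a measure" and Z w :: "'a \<Rightarrow> real"
  assumes P: "prob_space M" and Zm[measurable]: "Z \<in> borel_measurable M"
    and wm[measurable]: "w \<in> borel_measurable M"
    and wpos: "\<And>\<omega>. 0 \<le> w \<omega>" and wint: "integrable M w" and w1: "(\<integral>\<omega>. w \<omega> \<partial>M) = 1"
    and hc: "\<And>t. (\<integral>\<omega>. w \<omega> * cos (t * Z \<omega>) \<partial>M) = exp (-(t\<^sup>2)/2)"
    and hs: "\<And>t. (\<integral>\<omega>. w \<omega> * sin (t * Z \<omega>) \<partial>M) = 0"
    and B: "B \<in> sets borel"
  shows "(\<integral>\<omega>. w \<omega> * indicator B (Z \<omega>) \<partial>M) = measure std_normal_distribution B"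
proof -
  interpret prob_space M by fact
  let ?D = "density M w"
  let ?nu = "distr ?D lborel Z"
  have "emeasure ?D (space ?D) = 1"
  proof -
    have "emeasure ?D (space ?D) = (\<integral>\<^sup>+ x. ennreal (w x) \<partial>M)"
      by (simp add: emeasure_density nn_integral_set_ennreal[symmetric])
    also have "\<dots> = ennreal (\<integral>\<omega>. w \<omega> \<partial>M)"
      by (rule nn_integral_eq_integral) (use wint wpos in auto)
    finally show ?thesis using w1 by simp
  qed
  then have PD: "prob_space ?D" by (rule prob_spaceI)
  have Pnu: "prob_space ?nu"
    by (rule prob_space.prob_space_distr[OF PD]) simp
  have RD: "real_distribution ?nu"
    using Pnu by (auto simp: real_distribution_def real_distribution_axioms_def)
  have intw: "integrable M (\<lambda>\<omega>. w \<omega> * f \<omega>)" if "f \<in> borel_measurable M" "\<And>\<omega>. \<bar>f \<omega>\<bar> \<le> 1" for f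
    by (rule Bochner_Integration.integrable_bound[OF wint]) (use that wpos in \<open>auto simp: abs_mult intro!: mult_left_le\<close>)
  have "char ?nu = char std_normal_distribution"
  proof (rule ext)
    fix t
    have "char ?nu t = (CLINT \<omega>|?D. iexp (t * Z \<omega>))"
      unfolding char_def by (subst integral_distr) auto
    also have "\<dots> = (CLINT \<omega>|M. w \<omega> *\<^sub>R iexp (t * Z \<omega>))"
      by (subst integral_density) (auto simp: wpos)
    also have "\<dots> = complex_of_real (exp (-(t\<^sup>2)/2))"
    proof (rule complex_eqI)
      have ci: "complex_integrable M (\<lambda>\<omega>. w \<omega> *\<^sub>R iexp (t * Z \<omega>))"
        by (rule Bochner_Integration.integrable_bound[OF wint]) (auto simp: wpos norm_exp_i_times)
      show "Re (CLINT \<omega>|M. w \<omega> *\<^sub>R iexp (t * Z \<omega>)) = Re (complex_of_real (exp (-(t\<^sup>2)/2)))"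
        using integral_Re[OF ci, symmetric] hc[of t] by (simp add: Re_exp)
      show "Im (CLINT \<omega>|M. w \<omega> *\<^sub>R iexp (t * Z \<omega>)) = Im (complex_of_real (exp (-(t\<^sup>2)/2)))"
        using integral_Im[OF ci, symmetric] hs[of t] by (simp add: Im_exp)
    qed
    finally show "char ?nu t = char std_normal_distribution t"
      by (simp add: char_std_normal_distribution)
  qed
  then have eq: "?nu = std_normal_distribution"
    by (rule Levy_uniqueness[OF RD real_dist_normal_dist])
  have "(\<integral>\<omega>. w \<omega> * indicator B (Z \<omega>) \<partial>M) = (\<integral>x. indicator B x \<partial>?nu)"
    using B by (subst integral_distr) (auto simp: integral_density wpos)
  also have "\<dots> = measure std_normal_distribution B"
    using B by (simp add: eq)
  finally show ?thesis .
qed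

lemma kac:
  fixes M :: "'a measure" and X Y :: "'a \<Rightarrow> real"
  assumes P: "prob_space M" and Xm[measurable]: "X \<in> borel_measurable M"
    and Ym[measurable]: "Y \<in> borel_measurable M"
    and H: "\<And>s t. (\<integral>\<omega>. cos (s * X \<omega> + t * Y \<omega>) \<partial>M) = exp (-(s\<^sup>2 + t\<^sup>2)/2)"
    and H2: "\<And>s t. (\<integral>\<omega>. sin (s * X \<omega> + t * Y \<omega>) \<partial>M) = 0"
    and A: "A \<in> sets borel" and B: "B \<in> sets borel"
  shows "(\<integral>\<omega>. indicator A (X \<omega>) * indicator B (Y \<omega>) \<partial>M)
          = measure std_normal_distribution A * measure std_normal_distribution B"
proof -
  interpret prob_space M by fact
  note [simp] = prob_space
  let ?N = "std_normal_distribution"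
  have ib: "integrable M f" if "f \<in> borel_measurable M" "\<And>x. \<bar>f x\<bar> \<le> bnd" for f :: "'a \<Rightarrow> real" and bnd
    by (rule integrable_const_bound[where B=bnd]) (use that in auto)
  have [simp]: "integrable M (\<lambda>\<omega>. cos (s * X \<omega> + t * Y \<omega>))" for s t
    by (rule ib[of _ "1"]) auto
  have [simp]: "integrable M (\<lambda>\<omega>. sin (s * X \<omega> + t * Y \<omega>))" for s t
    by (rule ib[of _ "1"]) auto
  have [simp]: "integrable M (\<lambda>\<omega>. cos (s * X \<omega>))" "integrable M (\<lambda>\<omega>. sin (s * X \<omega>))"
     "integrable M (\<lambda>\<omega>. cos (s * Y \<omega>))" "integrable M (\<lambda>\<omega>. sin (s * Y \<omega>))" for s
    by (rule ib[of _ "1"]; auto)+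
  have [simp]: "integrable M (\<lambda>\<omega>. cos (s * X \<omega> - t * Y \<omega>))" "integrable M (\<lambda>\<omega>. sin (s * X \<omega> - t * Y \<omega>))" for s t
    by (rule ib[of _ "1"]; auto)+
  have Hm: "(\<integral>\<omega>. cos (s * X \<omega> - t * Y \<omega>) \<partial>M) = exp (-(s\<^sup>2 + t\<^sup>2)/2)"
     "(\<integral>\<omega>. sin (s * X \<omega> - t * Y \<omega>) \<partial>M) = 0" for s t
    using H[of s "-t"] H2[of s "-t"] by simp_all
  have hX: "(\<integral>\<omega>. cos (s * X \<omega>) \<partial>M) = exp (-(s\<^sup>2)/2)" "(\<integral>\<omega>. sin (s * X \<omega>) \<partial>M) = 0" for s
    using H[of s 0] H2[of s 0] by simp_all
  have hY: "(\<integral>\<omega>. cos (s * Y \<omega>) \<partial>M) = exp (-(s\<^sup>2)/2)" "(\<integral>\<omega>. sin (s * Y \<omega>) \<partial>M) = 0" for s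
    using H[of 0 s] H2[of 0 s] by simp_all
  have mB: "(\<integral>\<omega>. indicator B (Y \<omega>) \<partial>M) = measure ?N B"
    using std_normal_by_char[OF P Ym, of "\<lambda>_. 1" B] B hY by (simp add: prob_space)
  have cosB: "(\<integral>\<omega>. cos (s * X \<omega>) * indicator B (Y \<omega>) \<partial>M) = exp (-(s\<^sup>2)/2) * measure ?N B" for s
  proof -
    define c where "c = 1 + exp (-(s\<^sup>2)/2)"
    have c0: "c > 0" unfolding c_def by (simp add: add_pos_pos)
    have "(\<integral>\<omega>. (1 + cos (s * X \<omega>)) / c * indicator B (Y \<omega>) \<partial>M) = measure ?N B"
    proof (rule std_normal_by_char[OF P Ym _ _ _ _ _ _ B])
      show "(\<lambda>\<omega>. (1 + cos (s * X \<omega>)) / c) \<in> borel_measurable M" by simp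
      show "0 \<le> (1 + cos (s * X \<omega>)) / c" for \<omega>
        proof -
        have "-1 \<le> cos (s * X \<omega>)" by (rule cos_ge_minus_one)
        then have "0 \<le> 1 + cos (s * X \<omega>)" by linarith
        then show ?thesis using c0 by (rule divide_nonneg_pos)
      qed
      show "integrable M (\<lambda>\<omega>. (1 + cos (s * X \<omega>)) / c)" by simp
      show "(\<integral>\<omega>. (1 + cos (s * X \<omega>)) / c \<partial>M) = 1"
        using c0 by (simp add: hX c_def)
      show "(\<integral>\<omega>. (1 + cos (s * X \<omega>)) / c * cos (t * Y \<omega>) \<partial>M) = exp (-(t\<^sup>2)/2)" for t
      proof -
        have "(\<lambda>\<omega>. (1 + cos (s * X \<omega>)) / c * cos (t * Y \<omega>)) =
          (\<lambda>\<omega>. (cos (0 * X \<omega> + t * Y \<omega>) + (cos (s * X \<omega> + (-t) * Y \<omega>) + cos (s * X \<omega> + t * Y \<omega>)) / 2) / c)"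
          by (auto simp: sin_add sin_diff cos_add cos_diff field_simps)
        then have "(\<integral>\<omega>. (1 + cos (s * X \<omega>)) / c * cos (t * Y \<omega>) \<partial>M)
            = (exp (-(t\<^sup>2)/2) + exp (-(s\<^sup>2 + t\<^sup>2)/2)) / c"
          using c0 by (simp add: H Hm hY)
        also have "exp (-(s\<^sup>2 + t\<^sup>2)/2) = exp (-(s\<^sup>2)/2) * exp (-(t\<^sup>2)/2)"
          by (simp add: exp_add[symmetric] field_simps)
        finally show ?thesis using c0 by (simp add: c_def field_simps)
      qed
      show "(\<integral>\<omega>. (1 + cos (s * X \<omega>)) / c * sin (t * Y \<omega>) \<partial>M) = 0" for t
      proof -
        have "(\<lambda>\<omega>. (1 + cos (s * X \<omega>)) / c * sin (t * Y \<omega>)) =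
          (\<lambda>\<omega>. (sin (0 * X \<omega> + t * Y \<omega>) + (sin (s * X \<omega> + t * Y \<omega>) - sin (s * X \<omega> + (-t) * Y \<omega>)) / 2) / c)"
          by (auto simp: sin_add sin_diff cos_add cos_diff field_simps)
        then show ?thesis using c0 by (simp add: H2 Hm hY)
      qed
    qed
    moreover have "(\<integral>\<omega>. (1 + cos (s * X \<omega>)) / c * indicator B (Y \<omega>) \<partial>M)
       = ((\<integral>\<omega>. indicator B (Y \<omega>) \<partial>M) + (\<integral>\<omega>. cos (s * X \<omega>) * indicator B (Y \<omega>) \<partial>M)) / c"
    proof -
      have i1: "integrable M (\<lambda>\<omega>. indicator B (Y \<omega>) :: real)" by (rule ib[of _ "1"]) (use B in auto)
      have i2: "integrable M (\<lambda>\<omega>. cos (s * X \<omega>) * indicator B (Y \<omega>))" by (rule ib[of _ "1"]) (use B in \<open>auto simp: indicator_def\<close>)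
      have "(\<lambda>\<omega>. (1 + cos (s * X \<omega>)) / c * indicator B (Y \<omega>)) = (\<lambda>\<omega>. (indicator B (Y \<omega>) + cos (s * X \<omega>) * indicator B (Y \<omega>)) / c)"
        by (auto simp: field_simps)
      then show ?thesis using i1 i2 by simp
    qed
    ultimately show ?thesis using c0 mB by (simp add: c_def field_simps)
  qed
  have sinB: "(\<integral>\<omega>. sin (s * X \<omega>) * indicator B (Y \<omega>) \<partial>M) = 0" for s
  proof -
    have "(\<integral>\<omega>. (1 + sin (s * X \<omega>)) * indicator B (Y \<omega>) \<partial>M) = measure ?N B"
    proof (rule std_normal_by_char[OF P Ym _ _ _ _ _ _ B])
      show "(\<lambda>\<omega>. (1 + sin (s * X \<omega>))) \<in> borel_measurable M" by simp
      show "0 \<le> (1 + sin (s * X \<omega>))" for \<omega> using sin_ge_minus_one[of "s * X \<omega>"] by linarith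
      show "integrable M (\<lambda>\<omega>. (1 + sin (s * X \<omega>)))" by simp
      show "(\<integral>\<omega>. (1 + sin (s * X \<omega>)) \<partial>M) = 1"
        by (simp add: hX)
      show "(\<integral>\<omega>. (1 + sin (s * X \<omega>)) * cos (t * Y \<omega>) \<partial>M) = exp (-(t\<^sup>2)/2)" for t
      proof -
        have "(\<lambda>\<omega>. (1 + sin (s * X \<omega>)) * cos (t * Y \<omega>)) =
          (\<lambda>\<omega>. cos (0 * X \<omega> + t * Y \<omega>) + (sin (s * X \<omega> + t * Y \<omega>) + sin (s * X \<omega> + (-t) * Y \<omega>)) / 2)"
          by (auto simp: sin_add sin_diff cos_add cos_diff field_simps)
        then show ?thesis by (simp add: H H2 Hm hY)
      qed
      show "(\<integral>\<omega>. (1 + sin (s * X \<omega>)) * sin (t * Y \<omega>) \<partial>M) = 0" for t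
      proof -
        have "(\<lambda>\<omega>. (1 + sin (s * X \<omega>)) * sin (t * Y \<omega>)) =
          (\<lambda>\<omega>. sin (0 * X \<omega> + t * Y \<omega>) + (cos (s * X \<omega> + (-t) * Y \<omega>) - cos (s * X \<omega> + t * Y \<omega>)) / 2)"
          by (auto simp: sin_add sin_diff cos_add cos_diff field_simps)
        then show ?thesis by (simp add: H H2 Hm hY)
      qed
    qed
    moreover have "(\<integral>\<omega>. (1 + sin (s * X \<omega>)) * indicator B (Y \<omega>) \<partial>M)
       = (\<integral>\<omega>. indicator B (Y \<omega>) \<partial>M) + (\<integral>\<omega>. sin (s * X \<omega>) * indicator B (Y \<omega>) \<partial>M)"
    proof -
      have i1: "integrable M (\<lambda>\<omega>. indicator B (Y \<omega>) :: real)" by (rule ib[of _ "1"]) (use B in auto)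
      have i2: "integrable M (\<lambda>\<omega>. sin (s * X \<omega>) * indicator B (Y \<omega>))" by (rule ib[of _ "1"]) (use B in \<open>auto simp: indicator_def\<close>)
      have "(\<lambda>\<omega>. (1 + sin (s * X \<omega>)) * indicator B (Y \<omega>)) = (\<lambda>\<omega>. indicator B (Y \<omega>) + sin (s * X \<omega>) * indicator B (Y \<omega>))"
        by (auto simp: field_simps)
      then show ?thesis using i1 i2 by simp
    qed
    ultimately show ?thesis using mB by simp
  qed
  show ?thesis
  proof (cases "measure ?N B = 0")
    case True
    have "(\<integral>\<omega>. indicator A (X \<omega>) * indicator B (Y \<omega>) \<partial>M) \<le> (\<integral>\<omega>. indicator B (Y \<omega>) \<partial>M :: real)"
      by (rule Bochner_Integration.integral_mono) (use A B in \<open>auto intro!: ib[of _ "1"] simp: indicator_def\<close>)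
    moreover have "0 \<le> (\<integral>\<omega>. indicator A (X \<omega>) * indicator B (Y \<omega>) \<partial>M :: real)"
      by (rule Bochner_Integration.integral_nonneg) auto
    ultimately show ?thesis using True mB by simp
  next
    case False
    have c0: "measure ?N B > 0" using False by (simp add: zero_less_measure_iff)
    have "(\<integral>\<omega>. indicator B (Y \<omega>) / measure ?N B * indicator A (X \<omega>) \<partial>M) = measure ?N A"
    proof (rule std_normal_by_char[OF P Xm _ _ _ _ _ _ A])
      show "(\<lambda>\<omega>. indicator B (Y \<omega>) / measure ?N B) \<in> borel_measurable M" using B by simp
      show "0 \<le> indicator B (Y \<omega>) / measure ?N B" for \<omega> using c0 by simp
      show "integrable M (\<lambda>\<omega>. indicator B (Y \<omega>) / measure ?N B)"
        by (rule ib[of _ "1 / measure ?N B"]) (use B c0 in \<open>auto simp: indicator_def\<close>)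
      show "(\<integral>\<omega>. indicator B (Y \<omega>) / measure ?N B \<partial>M) = 1"
        using c0 mB by simp
      show "(\<integral>\<omega>. indicator B (Y \<omega>) / measure ?N B * cos (t * X \<omega>) \<partial>M) = exp (-(t\<^sup>2)/2)" for t
        using cosB[of t] c0 by (simp add: mult.commute)
      show "(\<integral>\<omega>. indicator B (Y \<omega>) / measure ?N B * sin (t * X \<omega>) \<partial>M) = 0" for t
        using sinB[of t] c0 by (simp add: mult.commute)
    qed
    then show ?thesis using c0 by (simp add: field_simps mult.commute)
  qed
qed



lemma measure_std_normal_eq:
  assumes "S \<in> sets borel"
  shows "measure std_normal_distribution S = (\<integral>x. std_normal_density x * indicator S x \<partial>lborel)"
proof -
  have "measure std_normal_distribution S = (\<integral>x. indicator S x \<partial>std_normal_distribution)"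
    using assms by simp
  also have "\<dots> = (\<integral>x. std_normal_density x * indicator S x \<partial>lborel)"
    using assms by (subst integral_density) auto
  finally show ?thesis .
qed

lemma integrable_ind_Ioo: "integrable lborel (\<lambda>x::real. c * indicator {a<..<b} x :: real)"
proof (cases "a \<le> b")
  case True
  have "{a<..<b} \<in> sets lborel" by simp
  moreover have "emeasure lborel {a<..<b} < \<infinity>" using True by simp
  ultimately show ?thesis by (intro integrable_mult_right integrable_real_indicator) auto
next
  case False
  then have "{a<..<b} = {}" by auto
  then show ?thesis by simp
qed

lemma std_normal_interval_lower:
  assumes "a \<le> b" "-b \<le> a"
  shows "measure std_normal_distribution {a<..<b} \<ge> (b - a) * std_normal_density b"
proof -
  have "(b - a) * std_normal_density b = (\<integral>x. std_normal_density b * indicator {a<..<b} x \<partial>lborel)"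
    using assms by simp
  also have "\<dots> \<le> (\<integral>x. std_normal_density x * indicator {a<..<b} x \<partial>lborel)"
  proof (rule Bochner_Integration.integral_mono[OF integrable_ind_Ioo])
    show "integrable lborel (\<lambda>x. std_normal_density x * indicator {a<..<b} x)"
      by (rule Bochner_Integration.integrable_bound[OF integrable_ind_Ioo[of "1 / sqrt (2 * pi)" a b]])
         (auto simp: std_normal_density_def indicator_def divide_right_mono)
    fix x :: real
    show "std_normal_density b * indicator {a<..<b} x \<le> std_normal_density x * indicator {a<..<b} x"
    proof (cases "x \<in> {a<..<b}")
      case True
      then have "x\<^sup>2 \<le> b\<^sup>2" using assms by (auto intro!: power2_le_iff_abs_le[THEN iffD2] abs_leI)
      then have "exp (- (b\<^sup>2 / 2)) \<le> exp (- (x\<^sup>2 / 2))" by simp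
      then show ?thesis using True by (auto simp: std_normal_density_def divide_right_mono)
    qed simp
  qed
  also have "\<dots> = measure std_normal_distribution {a<..<b}"
    by (rule measure_std_normal_eq[symmetric]) simp
  finally show ?thesis .
qed

lemma std_normal_interval_upper:
  assumes "a \<le> b"
  shows "measure std_normal_distribution {a<..<b} \<le> (b - a) / sqrt (2 * pi)"
proof -
  have "measure std_normal_distribution {a<..<b} = (\<integral>x. std_normal_density x * indicator {a<..<b} x \<partial>lborel)"
    by (rule measure_std_normal_eq) simp
  also have "\<dots> \<le> (\<integral>x. 1 / sqrt (2 * pi) * indicator {a<..<b} x \<partial>lborel)"
  proof (rule Bochner_Integration.integral_mono[OF _ integrable_ind_Ioo])
    show "integrable lborel (\<lambda>x. std_normal_density x * indicator {a<..<b} x)"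
      by (rule Bochner_Integration.integrable_bound[OF integrable_ind_Ioo[of "1 / sqrt (2 * pi)" a b]])
         (auto simp: std_normal_density_def indicator_def divide_right_mono)
    fix x :: real
    show "std_normal_density x * indicator {a<..<b} x \<le> 1 / sqrt (2 * pi) * indicator {a<..<b} x"
      by (auto simp: std_normal_density_def indicator_def divide_right_mono)
  qed
  also have "\<dots> = (b - a) / sqrt (2 * pi)" using assms by simp
  finally show ?thesis .
qed

lemma std_normal_abs_ge_half:
  "measure std_normal_distribution {x. 1/2 \<le> \<bar>x\<bar>} \<ge> 1 - 1 / sqrt (2 * pi)"
proof -
  interpret prob_space std_normal_distribution using prob_space_normal_density by simp
  have eq: "{x. 1/2 \<le> \<bar>x\<bar>} = space std_normal_distribution - {-1/2<..<1/2::real}"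
    by auto
  have "measure std_normal_distribution {x. 1/2 \<le> \<bar>x\<bar>} = 1 - measure std_normal_distribution {-1/2<..<1/2::real}"
    unfolding eq by (rule prob_compl) simp
  moreover have "measure std_normal_distribution {-1/2<..<1/2::real} \<le> 1 / sqrt (2 * pi)"
    using std_normal_interval_upper[of "-1/2" "1/2"] by simp
  ultimately show ?thesis by simp
qed


lemma L2_prod_int:
  assumes "L2_01 f" "L2_01 g"
  shows "set_integrable lborel {0..1} (\<lambda>t. f t * g t)"
proof -
  have fm[measurable]: "f \<in> borel_measurable borel" and gm[measurable]: "g \<in> borel_measurable borel"
    using assms by (auto simp: L2_01_def)
  have i1: "integrable lborel (\<lambda>t. indicator {0..1} t *\<^sub>R (f t)\<^sup>2)"
    and i2: "integrable lborel (\<lambda>t. indicator {0..1} t *\<^sub>R (g t)\<^sup>2)"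
    using assms by (auto simp: L2_01_def set_integrable_def)
  have "integrable lborel (\<lambda>t. indicator {0..1} t *\<^sub>R (f t)\<^sup>2 + indicator {0..1} t *\<^sub>R (g t)\<^sup>2)"
    using i1 i2 by (rule Bochner_Integration.integrable_add)
  then show ?thesis unfolding set_integrable_def
  proof (rule Bochner_Integration.integrable_bound)
    show "(\<lambda>t. indicator {0..1} t *\<^sub>R (f t * g t)) \<in> borel_measurable lborel" by simp
    show "AE x in lborel. norm (indicator {0..1} x *\<^sub>R (f x * g x)) \<le> norm (indicator {0..1} x *\<^sub>R (f x)\<^sup>2 + indicator {0..1} x *\<^sub>R (g x)\<^sup>2)"
    proof (rule AE_I2)
      fix x
      have h0: "0 \<le> (\<bar>f x\<bar> - \<bar>g x\<bar>)\<^sup>2" by simp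
      have h1: "(\<bar>f x\<bar> - \<bar>g x\<bar>)\<^sup>2 = (f x)\<^sup>2 + (g x)\<^sup>2 - 2 * \<bar>f x * g x\<bar>"
        by (simp add: power2_eq_square abs_mult algebra_simps)
      have "\<bar>f x * g x\<bar> \<le> (f x)\<^sup>2 + (g x)\<^sup>2"
        using h0 h1 abs_ge_zero[of "f x * g x"] by linarith
      then show "norm (indicator {0..1} x *\<^sub>R (f x * g x)) \<le> norm (indicator {0..1} x *\<^sub>R (f x)\<^sup>2 + indicator {0..1} x *\<^sub>R (g x)\<^sup>2)"
        by (auto simp: indicator_def)
    qed
  qed
qed

lemma L2_lin:
  assumes "L2_01 f" "L2_01 g"
  shows "L2_01 (\<lambda>t. a * f t + b * g t)"
proof -
  have fm[measurable]: "f \<in> borel_measurable borel" and gm[measurable]: "g \<in> borel_measurable borel"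
    using assms by (auto simp: L2_01_def)
  have i1: "set_integrable lborel {0..1} (\<lambda>t. f t * f t)" and i2: "set_integrable lborel {0..1} (\<lambda>t. g t * g t)"
    and i3: "set_integrable lborel {0..1} (\<lambda>t. f t * g t)"
    using L2_prod_int assms by auto
  have "set_integrable lborel {0..1} (\<lambda>t. a\<^sup>2 * (f t * f t) + (2 * a * b * (f t * g t) + b\<^sup>2 * (g t * g t)))"
    by (intro set_integral_add set_integrable_mult_right i1 i2 i3)
  moreover have "(\<lambda>t. a\<^sup>2 * (f t * f t) + (2 * a * b * (f t * g t) + b\<^sup>2 * (g t * g t))) = (\<lambda>t. (a * f t + b * g t)\<^sup>2)"
    by (auto simp: power2_eq_square algebra_simps)
  ultimately show ?thesis by (simp add: L2_01_def)
qed

lemma inner_lin: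
  assumes "L2_01 f" "L2_01 g" "L2_01 h"
  shows "inner01 (\<lambda>t. a * f t + b * g t) h = a * inner01 f h + b * inner01 g h"
proof -
  have i1: "set_integrable lborel {0..1} (\<lambda>t. f t * h t)" and i2: "set_integrable lborel {0..1} (\<lambda>t. g t * h t)"
    using L2_prod_int assms by auto
  have "(\<lambda>t. (a * f t + b * g t) * h t) = (\<lambda>t. a * (f t * h t) + b * (g t * h t))"
    by (auto simp: algebra_simps)
  then show ?thesis unfolding inner01_def
    using i1 i2 by (simp add: set_integral_add set_integrable_mult_right set_integral_mult_right)
qed

lemma L2_zero: "L2_01 (\<lambda>t. 0)"
  by (simp add: L2_01_def set_integrable_def)

lemma L2_sum:
  assumes "finite S" "\<And>j. j \<in> S \<Longrightarrow> L2_01 (g j)"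
  shows "L2_01 (\<lambda>t. \<Sum>j\<in>S. c j * g j t)"
  using assms
proof (induction S rule: finite_induct)
  case empty
  then show ?case by (simp add: L2_zero)
next
  case (insert x F)
  have "L2_01 (\<lambda>t. c x * g x t + 1 * (\<Sum>j\<in>F. c j * g j t))"
    using insert by (intro L2_lin) auto
  then show ?case using insert by simp
qed

lemma inner_zero: "inner01 (\<lambda>t. 0) h = 0"
  by (simp add: inner01_def)

lemma inner_sum_left:
  assumes "finite S" "\<And>j. j \<in> S \<Longrightarrow> L2_01 (g j)" "L2_01 h"
  shows "inner01 (\<lambda>t. \<Sum>j\<in>S. c j * g j t) h = (\<Sum>j\<in>S. c j * inner01 (g j) h)"
  using assms
proof (induction S rule: finite_induct)
  case empty
  then show ?case by (simp add: inner_zero)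
next
  case (insert x F)
  have "inner01 (\<lambda>t. c x * g x t + 1 * (\<Sum>j\<in>F. c j * g j t)) h = c x * inner01 (g x) h + 1 * inner01 (\<lambda>t. \<Sum>j\<in>F. c j * g j t) h"
    using insert by (intro inner_lin L2_sum) auto
  then show ?case using insert by simp
qed

lemma inner_sym: "inner01 f g = inner01 g f"
  by (simp add: inner01_def mult.commute)

lemma ftheta_L2:
  assumes "ONB_01 \<phi>"
  shows "L2_01 (f_theta \<phi> d \<alpha>)"
proof -
  have "L2_01 (\<lambda>t. \<Sum>j\<in>{1..d}. \<alpha> j * \<phi> j t)"
    using assms by (intro L2_sum) (auto simp: ONB_01_def)
  then show ?thesis by (simp add: f_theta_def[abs_def])
qed

lemma ftheta_inner:
  assumes "ONB_01 \<phi>"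
  shows "inner01 (f_theta \<phi> d \<alpha>) (f_theta \<phi> d \<beta>) = (\<Sum>j=1..d. \<alpha> j * \<beta> j)"
proof -
  have L2: "\<And>j. j \<in> {1..d} \<Longrightarrow> L2_01 (\<phi> j)" using assms by (auto simp: ONB_01_def)
  have on: "\<And>i j. i \<in> {1..d} \<Longrightarrow> j \<in> {1..d} \<Longrightarrow> inner01 (\<phi> i) (\<phi> j) = (if i = j then 1 else 0)"
    using assms by (auto simp: ONB_01_def)
  have "inner01 (f_theta \<phi> d \<alpha>) (f_theta \<phi> d \<beta>) = (\<Sum>i\<in>{1..d}. \<alpha> i * inner01 (\<phi> i) (f_theta \<phi> d \<beta>))"
    unfolding f_theta_def[abs_def] using L2 ftheta_L2[OF assms, of d \<beta>]
    by (intro inner_sum_left) (auto simp: f_theta_def[abs_def])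
  also have "\<dots> = (\<Sum>i\<in>{1..d}. \<alpha> i * \<beta> i)"
  proof (rule sum.cong[OF refl])
    fix i assume i: "i \<in> {1..d}"
    have "inner01 (\<phi> i) (f_theta \<phi> d \<beta>) = inner01 (\<lambda>t. \<Sum>j\<in>{1..d}. \<beta> j * \<phi> j t) (\<phi> i)"
      by (simp add: inner_sym f_theta_def[abs_def])
    also have "\<dots> = (\<Sum>j\<in>{1..d}. \<beta> j * inner01 (\<phi> j) (\<phi> i))"
      using L2 i by (intro inner_sum_left) auto
    also have "\<dots> = (\<Sum>j\<in>{1..d}. if j = i then \<beta> j else 0)"
      using on i by (intro sum.cong) auto
    also have "\<dots> = \<beta> i" using i by simp
    finally show "\<alpha> i * inner01 (\<phi> i) (f_theta \<phi> d \<beta>) = \<alpha> i * \<beta> i" by simp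
  qed
  finally show ?thesis by simp
qed


lemma normal_cos_sin:
  fixes M :: "'a measure"
  assumes P: "prob_space M" and D: "distributed M lborel Z (normal_density 0 \<sigma>)" and s: "\<sigma> > 0"
  shows "(\<integral>\<omega>. cos (Z \<omega>) \<partial>M) = exp (-(\<sigma>\<^sup>2)/2)" "(\<integral>\<omega>. sin (Z \<omega>) \<partial>M) = 0"
proof -
  interpret prob_space M by fact
  have D': "distributed M lborel (\<lambda>x. (Z x - 0) / \<sigma>) std_normal_density"
    using D normal_standard_normal_convert[OF s] by simp
  define Z' where "Z' = (\<lambda>x. Z x / \<sigma>)"
  have Zm[measurable]: "Z' \<in> borel_measurable M"
    using D' unfolding distributed_def Z'_def by auto
  have dZ: "distr M lborel Z' = std_normal_distribution"
    using D' unfolding distributed_def Z'_def by auto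
  have ZZ: "Z \<omega> = \<sigma> * Z' \<omega>" for \<omega> using s by (simp add: Z'_def)
  interpret N: prob_space std_normal_distribution using prob_space_normal_density by simp
  have ci: "complex_integrable std_normal_distribution (\<lambda>x. iexp (\<sigma> * x))"
    by (rule N.integrable_iexp) auto
  have ch: "(CLINT x|std_normal_distribution. iexp (\<sigma> * x)) = complex_of_real (exp (-(\<sigma>\<^sup>2)/2))"
    using char_std_normal_distribution unfolding char_def by (metis (no_types, lifting))
  have "(\<integral>\<omega>. cos (Z \<omega>) \<partial>M) = (\<integral>\<omega>. cos (\<sigma> * Z' \<omega>) \<partial>M)" by (simp add: ZZ)
  also have "\<dots> = (\<integral>x. cos (\<sigma> * x) \<partial>std_normal_distribution)"
    by (subst dZ[symmetric], subst integral_distr) auto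
  also have "\<dots> = Re (CLINT x|std_normal_distribution. iexp (\<sigma> * x))"
    using integral_Re[OF ci] by (simp add: Re_exp)
  also have "\<dots> = exp (-(\<sigma>\<^sup>2)/2)" using ch by simp
  finally show "(\<integral>\<omega>. cos (Z \<omega>) \<partial>M) = exp (-(\<sigma>\<^sup>2)/2)" .
  have "(\<integral>\<omega>. sin (Z \<omega>) \<partial>M) = (\<integral>\<omega>. sin (\<sigma> * Z' \<omega>) \<partial>M)" by (simp add: ZZ)
  also have "\<dots> = (\<integral>x. sin (\<sigma> * x) \<partial>std_normal_distribution)"
    by (subst dZ[symmetric], subst integral_distr) auto
  also have "\<dots> = Im (CLINT x|std_normal_distribution. iexp (\<sigma> * x))"
    using integral_Im[OF ci] by (simp add: Im_exp)
  also have "\<dots> = 0" using ch by simp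
  finally show "(\<integral>\<omega>. sin (Z \<omega>) \<partial>M) = 0" .
qed

lemma ftheta_lin:
  "(\<lambda>x. a * f_theta \<phi> d \<alpha> x + b * f_theta \<phi> d \<beta> x) = f_theta \<phi> d (\<lambda>j. a * \<alpha> j + b * \<beta> j)"
  by (auto simp: f_theta_def sum_distrib_left sum.distrib[symmetric] algebra_simps intro!: sum.cong)

lemma L1_lower:
  fixes M :: "'a measure" and I :: "(real \<Rightarrow> real) \<Rightarrow> 'a \<Rightarrow> real"
    and \<phi> :: "nat \<Rightarrow> real \<Rightarrow> real" and d :: nat and \<theta> \<theta>' :: "nat \<Rightarrow> real" and R2 sq2 :: real
  assumes ONB: "ONB_01 \<phi>" and W: "wiener_integral M I"
    and n1: "sqnorm d \<theta> = R2" and n2: "sqnorm d \<theta>' = R2"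
    and dq: "(\<Sum>j=1..d. (\<theta> j - \<theta>' j)\<^sup>2) = sq2" and q0: "sq2 > 0" and p0: "4 * R2 - sq2 > 0"
  shows "L1_Q0_dist M \<phi> d I \<theta> \<theta>' \<ge> (1 - 1 / sqrt (2 * pi)) * (sqrt sq2 / sqrt (4 * R2 - sq2))
            * std_normal_density ((R2 + sqrt sq2 / 2) / sqrt (4 * R2 - sq2))"
proof -
  have P: "prob_space M" and Imeas: "\<And>f. L2_01 f \<Longrightarrow> I f \<in> borel_measurable M"
    and lin: "\<And>f g a b. L2_01 f \<Longrightarrow> L2_01 g \<Longrightarrow> (AE \<omega> in M. I (\<lambda>t. a * f t + b * g t) \<omega> = a * I f \<omega> + b * I g \<omega>)"
    and dist: "\<And>f. L2_01 f \<Longrightarrow> inner01 f f > 0 \<Longrightarrow> distributed M lborel (I f) (normal_density 0 (sqrt (inner01 f f)))"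
    using W unfolding wiener_integral_def by blast+
  interpret prob_space M by fact
  define sp where "sp = sqrt (4 * R2 - sq2)"
  define sq where "sq = sqrt sq2"
  have sp0: "sp > 0" using p0 by (simp add: sp_def)
  have sq0: "sq > 0" using q0 by (simp add: sq_def)
  define p where "p = f_theta \<phi> d (\<lambda>j. \<theta> j + \<theta>' j)"
  define q where "q = f_theta \<phi> d (\<lambda>j. \<theta> j - \<theta>' j)"
  have Lp: "L2_01 p" and Lq: "L2_01 q" unfolding p_def q_def using ftheta_L2[OF ONB] by auto
  have Ipm[measurable]: "I p \<in> borel_measurable M" and Iqm[measurable]: "I q \<in> borel_measurable M"
    using Imeas Lp Lq by auto
  have sumsq: "(\<Sum>j=1..d. (\<theta> j + \<theta>' j)\<^sup>2) = 4 * R2 - sq2"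
  proof -
    have "(\<Sum>j=1..d. (\<theta> j + \<theta>' j)\<^sup>2) = (\<Sum>j=1..d. 2 * (\<theta> j)\<^sup>2 + 2 * (\<theta>' j)\<^sup>2 - (\<theta> j - \<theta>' j)\<^sup>2)"
      by (intro sum.cong) (auto simp: power2_eq_square algebra_simps)
    also have "\<dots> = 2 * sqnorm d \<theta> + 2 * sqnorm d \<theta>' - (\<Sum>j=1..d. (\<theta> j - \<theta>' j)\<^sup>2)"
      by (simp add: sqnorm_def sum.distrib sum_subtractf sum_distrib_left)
    finally show ?thesis using n1 n2 dq by simp
  qed
  have sumpq: "(\<Sum>j=1..d. (\<theta> j + \<theta>' j) * (\<theta> j - \<theta>' j)) = 0"
  proof -
    have "(\<Sum>j=1..d. (\<theta> j + \<theta>' j) * (\<theta> j - \<theta>' j)) = (\<Sum>j=1..d. (\<theta> j)\<^sup>2 - (\<theta>' j)\<^sup>2)"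
      by (intro sum.cong) (auto simp: power2_eq_square algebra_simps)
    also have "\<dots> = sqnorm d \<theta> - sqnorm d \<theta>'"
      by (simp add: sqnorm_def sum_subtractf)
    finally show ?thesis using n1 n2 by simp
  qed
  have inn: "inner01 (\<lambda>x. a * p x + b * q x) (\<lambda>x. a * p x + b * q x) = a\<^sup>2 * (4 * R2 - sq2) + b\<^sup>2 * sq2" for a b
  proof -
    have "inner01 (\<lambda>x. a * p x + b * q x) (\<lambda>x. a * p x + b * q x)
        = (\<Sum>j=1..d. (a * (\<theta> j + \<theta>' j) + b * (\<theta> j - \<theta>' j)) * (a * (\<theta> j + \<theta>' j) + b * (\<theta> j - \<theta>' j)))"
      unfolding p_def q_def ftheta_lin by (rule ftheta_inner[OF ONB])
    also have "\<dots> = a\<^sup>2 * (\<Sum>j=1..d. (\<theta> j + \<theta>' j)\<^sup>2) + 2 * a * b * (\<Sum>j=1..d. (\<theta> j + \<theta>' j) * (\<theta> j - \<theta>' j))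
        + b\<^sup>2 * (\<Sum>j=1..d. (\<theta> j - \<theta>' j)\<^sup>2)"
      by (simp add: sum_distrib_left sum.distrib[symmetric] power2_eq_square algebra_simps)
    finally show ?thesis using sumsq sumpq dq by simp
  qed
  define X where "X = (\<lambda>\<omega>. I p \<omega> / sp)"
  define Y where "Y = (\<lambda>\<omega>. I q \<omega> / sq)"
  have Xm[measurable]: "X \<in> borel_measurable M" and Ym[measurable]: "Y \<in> borel_measurable M"
    unfolding X_def Y_def by auto
  have HH: "(\<integral>\<omega>. cos (s * X \<omega> + t * Y \<omega>) \<partial>M) = exp (-(s\<^sup>2 + t\<^sup>2)/2) \<and>
            (\<integral>\<omega>. sin (s * X \<omega> + t * Y \<omega>) \<partial>M) = 0" for s t
  proof (cases "s = 0 \<and> t = 0")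
    case True
    then show ?thesis by (simp add: prob_space)
  next
    case False
    define g where "g = (\<lambda>x. (s / sp) * p x + (t / sq) * q x)"
    have Lg: "L2_01 g" unfolding g_def using Lp Lq by (rule L2_lin)
    have ig: "inner01 g g = s\<^sup>2 + t\<^sup>2"
      unfolding g_def inn using sp0 sq0 p0 q0 by (simp add: sp_def sq_def power_divide)
    have pos: "s\<^sup>2 + t\<^sup>2 > 0" using False by (simp add: add_pos_nonneg add_nonneg_pos sum_power2_gt_zero_iff)
    have Dg: "distributed M lborel (I g) (normal_density 0 (sqrt (s\<^sup>2 + t\<^sup>2)))"
      using dist[OF Lg] ig pos by simp
    have Igm[measurable]: "I g \<in> borel_measurable M" using Imeas Lg by auto
    have ae: "AE \<omega> in M. I g \<omega> = s * X \<omega> + t * Y \<omega>"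
      using lin[OF Lp Lq, of "s / sp" "t / sq"] unfolding g_def X_def Y_def by eventually_elim simp
    have "(\<integral>\<omega>. cos (s * X \<omega> + t * Y \<omega>) \<partial>M) = (\<integral>\<omega>. cos (I g \<omega>) \<partial>M)"
      by (rule integral_cong_AE) (use ae in \<open>auto elim!: eventually_mono\<close>)
    moreover have "(\<integral>\<omega>. sin (s * X \<omega> + t * Y \<omega>) \<partial>M) = (\<integral>\<omega>. sin (I g \<omega>) \<partial>M)"
      by (rule integral_cong_AE) (use ae in \<open>auto elim!: eventually_mono\<close>)
    ultimately show ?thesis using normal_cos_sin[OF P Dg] pos by simp
  qed
  let ?N = "std_normal_distribution"
  have prodf: "(\<integral>\<omega>. indicator A (X \<omega>) * indicator B (Y \<omega>) \<partial>M) = measure ?N A * measure ?N B"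
    if "A \<in> sets borel" "B \<in> sets borel" for A B
    by (rule kac[OF P Xm Ym _ _ that]) (use HH in simp_all)
  define \<alpha> where "\<alpha> = (R2 - sq / 2) / sp"
  define \<beta> where "\<beta> = (R2 + sq / 2) / sp"
  have R0: "R2 \<ge> 0" using n1 by (auto simp: sqnorm_def intro: sum_nonneg)
  have f1: "f_theta \<phi> d \<theta> = (\<lambda>x. 1/2 * p x + 1/2 * q x)"
    unfolding p_def q_def ftheta_lin by (rule arg_cong[where f="f_theta \<phi> d"], rule ext) (simp add: field_simps)
  have f2: "f_theta \<phi> d \<theta>' = (\<lambda>x. 1/2 * p x + (-1/2) * q x)"
    unfolding p_def q_def ftheta_lin by (rule arg_cong[where f="f_theta \<phi> d"], rule ext) (simp add: field_simps)
  have ae1: "AE \<omega> in M. I (f_theta \<phi> d \<theta>) \<omega> = 1/2 * I p \<omega> + 1/2 * I q \<omega>"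
    unfolding f1 by (rule lin[OF Lp Lq])
  have ae2: "AE \<omega> in M. I (f_theta \<phi> d \<theta>') \<omega> = 1/2 * I p \<omega> + (-1/2) * I q \<omega>"
    unfolding f2 by (rule lin[OF Lp Lq])
  have ptw: "AE \<omega> in M. indicator {\<alpha><..<\<beta>} (X \<omega>) * indicator {y. 1/2 \<le> \<bar>y\<bar>} (Y \<omega>)
               \<le> \<bar>Phi_W \<phi> d I \<theta> \<omega> - Phi_W \<phi> d I \<theta>' \<omega>\<bar>"
    using ae1 ae2
  proof eventually_elim
    case (elim \<omega>)
    show ?case
    proof (cases "X \<omega> \<in> {\<alpha><..<\<beta>} \<and> Y \<omega> \<in> {y. 1/2 \<le> \<bar>y\<bar>}")
      case False
      then show ?thesis by (auto simp: indicator_def)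
    next
      case True
      have IP: "I p \<omega> = sp * X \<omega>" and IQ: "I q \<omega> = sq * Y \<omega>" using sp0 sq0 by (auto simp: X_def Y_def)
      have a1: "sp * \<alpha> < I p \<omega>" and b1: "I p \<omega> < sp * \<beta>"
        using True sp0 unfolding IP by auto
      have a2: "sp * \<alpha> = R2 - sq / 2" and b2: "sp * \<beta> = R2 + sq / 2"
        using sp0 by (auto simp: \<alpha>_def \<beta>_def)
      have sn: "sqnorm d \<theta> / 2 = R2 / 2" "sqnorm d \<theta>' / 2 = R2 / 2" using n1 n2 by auto
      show ?thesis
      proof (cases "Y \<omega> \<ge> 0")
        case True2: True
        then have "Y \<omega> \<ge> 1/2" using True by auto
        then have "I q \<omega> \<ge> sq / 2" unfolding IQ using sq0 by (simp add: mult_left_mono[of "1/2" "Y \<omega>" sq, simplified])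
        then have "I (f_theta \<phi> d \<theta>) \<omega> \<ge> sqnorm d \<theta> / 2" and "I (f_theta \<phi> d \<theta>') \<omega> < sqnorm d \<theta>' / 2"
          using elim a1 b1 a2 b2 sn by linarith+
        then show ?thesis by (simp add: Phi_W_def indicator_def)
      next
        case False2: False
        then have "Y \<omega> \<le> -1/2" using True by auto
        then have "I q \<omega> \<le> - sq / 2" unfolding IQ using sq0 by (simp add: mult_left_mono[of "Y \<omega>" "-1/2" sq, simplified])
        then have "I (f_theta \<phi> d \<theta>) \<omega> < sqnorm d \<theta> / 2" and "I (f_theta \<phi> d \<theta>') \<omega> \<ge> sqnorm d \<theta>' / 2"
          using elim a1 b1 a2 b2 sn by linarith+
        then show ?thesis by (simp add: Phi_W_def indicator_def)
      qed
    qed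
  qed
  have Ith[measurable]: "I (f_theta \<phi> d \<theta>) \<in> borel_measurable M" "I (f_theta \<phi> d \<theta>') \<in> borel_measurable M"
    using Imeas ftheta_L2[OF ONB] by auto
  have ib: "integrable M f" if "f \<in> borel_measurable M" "\<And>x. \<bar>f x\<bar> \<le> bnd" for f :: "'a \<Rightarrow> real" and bnd
    by (rule integrable_const_bound[where B=bnd]) (use that in auto)
  have "(\<integral>\<omega>. indicator {\<alpha><..<\<beta>} (X \<omega>) * indicator {y. 1/2 \<le> \<bar>y\<bar>} (Y \<omega>) \<partial>M)
        \<le> (\<integral>\<omega>. \<bar>Phi_W \<phi> d I \<theta> \<omega> - Phi_W \<phi> d I \<theta>' \<omega>\<bar> \<partial>M)"
  proof (rule integral_mono_AE[OF _ _ ptw])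
    show "integrable M (\<lambda>\<omega>. indicator {\<alpha><..<\<beta>} (X \<omega>) * indicator {y. 1/2 \<le> \<bar>y\<bar>} (Y \<omega>) :: real)"
      by (rule ib[of _ 1]) (auto simp: indicator_def)
    show "integrable M (\<lambda>\<omega>. \<bar>Phi_W \<phi> d I \<theta> \<omega> - Phi_W \<phi> d I \<theta>' \<omega>\<bar>)"
      by (rule ib[of _ 1]) (auto simp: Phi_W_def)
  qed
  also have "\<dots> = L1_Q0_dist M \<phi> d I \<theta> \<theta>'" by (simp add: L1_Q0_dist_def)
  finally have L: "measure ?N {\<alpha><..<\<beta>} * measure ?N {y. 1/2 \<le> \<bar>y\<bar>} \<le> L1_Q0_dist M \<phi> d I \<theta> \<theta>'"
    using prodf[of "{\<alpha><..<\<beta>}" "{y. 1/2 \<le> \<bar>y\<bar>}"] by simp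
  have ab1: "R2 - sq / 2 \<le> R2 + sq / 2" "-(R2 + sq / 2) \<le> R2 - sq / 2" using sq0 R0 by auto
  have ab2: "(R2 - sq / 2) / sp \<le> (R2 + sq / 2) / sp" "(-(R2 + sq / 2)) / sp \<le> (R2 - sq / 2) / sp"
    using divide_right_mono[OF ab1(1), of sp] divide_right_mono[OF ab1(2), of sp] sp0 by auto
  have ab: "\<alpha> \<le> \<beta>" "-\<beta> \<le> \<alpha>"
  proof -
    have eqm: "-((R2 + sq / 2) / sp) = (- R2 - sq / 2) / sp" using sp0 by (simp add: field_simps)
    show "\<alpha> \<le> \<beta>" using ab2 unfolding \<alpha>_def \<beta>_def by simp
    show "-\<beta> \<le> \<alpha>" using ab2 eqm unfolding \<alpha>_def \<beta>_def by simp
  qed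
  have m1: "measure ?N {\<alpha><..<\<beta>} \<ge> (\<beta> - \<alpha>) * std_normal_density \<beta>"
    by (rule std_normal_interval_lower[OF ab])
  have m2: "measure ?N {y. 1/2 \<le> \<bar>y\<bar>} \<ge> 1 - 1 / sqrt (2 * pi)" by (rule std_normal_abs_ge_half)
  have ba: "\<beta> - \<alpha> = sq / sp" using sp0 by (simp add: \<alpha>_def \<beta>_def field_simps)
  have c0: "0 \<le> 1 - 1 / sqrt (2 * pi)"
  proof -
    have "1 \<le> 2 * pi" using pi_gt3 by simp
    then have "1 \<le> sqrt (2 * pi)" by (metis real_sqrt_one real_sqrt_le_iff)
    then show ?thesis by simp
  qed
  have "(1 - 1 / sqrt (2 * pi)) * (sq / sp) * std_normal_density \<beta>
      = ((\<beta> - \<alpha>) * std_normal_density \<beta>) * (1 - 1 / sqrt (2 * pi))" by (simp add: ba)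
  also have "\<dots> \<le> measure ?N {\<alpha><..<\<beta>} * measure ?N {y. 1/2 \<le> \<bar>y\<bar>}"
    by (intro mult_mono m1 m2 c0) (use ba sp0 sq0 in auto)
  finally show ?thesis using L by (simp add: sp_def sq_def \<beta>_def)
qed


lemma final_ineq:
  fixes D k s2 :: real
  assumes D0: "D > 0" and k0: "0 < k" and kD: "k \<le> D\<^sup>2" and ks: "k \<le> s2" and sk4: "s2 \<le> 4 * k"
  shows "sqrt k / (4 * pi * D) * exp (- (D\<^sup>2)) \<le>
     (1 - 1 / sqrt (2 * pi)) * (sqrt s2 / sqrt (4 * (D\<^sup>2 + k) - s2))
        * std_normal_density ((D\<^sup>2 + k + sqrt s2 / 2) / sqrt (4 * (D\<^sup>2 + k) - s2))"
proof -
  define R2 where "R2 = D\<^sup>2 + k"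
  define sp where "sp = sqrt (4 * R2 - s2)"
  define s where "s = sqrt s2"
  define \<beta> where "\<beta> = (R2 + s / 2) / sp"
  define r where "r = s / sqrt k"
  define u where "u = s2 / k"
  have sk0: "sqrt k > 0" using k0 by simp
  have skD: "sqrt k \<le> D"
  proof -
    have "sqrt k \<le> sqrt (D\<^sup>2)" using kD by (rule real_sqrt_le_mono)
    then show ?thesis using D0 by simp
  qed
  have s2p: "s2 > 0" using k0 ks by linarith
  have s0: "s > 0" using s2p by (simp add: s_def)
  have ss: "s * s = s2" using s2p by (simp add: s_def)
  have srk: "s = r * sqrt k" using sk0 by (simp add: r_def)
  have r0: "r \<ge> 0" using s0 sk0 by (simp add: r_def)
  have ru: "r\<^sup>2 = u" using k0 s2p by (simp add: r_def u_def s_def power_divide)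
  have u1: "1 \<le> u" and u4: "u \<le> 4" using ks sk4 k0 by (auto simp: u_def field_simps)
  have s2u: "s2 = u * k" using k0 by (simp add: u_def)
  have sp2: "sp\<^sup>2 = 4 * R2 - s2" using sk4 kD k0 by (simp add: sp_def R2_def)
  have sp4: "4 * D\<^sup>2 \<le> 4 * R2 - s2" using sk4 by (simp add: R2_def)
  have spD: "2 * D \<le> sp"
  proof -
    have "sqrt ((2 * D)\<^sup>2) \<le> sp" unfolding sp_def using sp4 by (intro real_sqrt_le_mono) (simp add: power_mult_distrib)
    then have "\<bar>2 * D\<bar> \<le> sp" by (simp only: real_sqrt_abs)
    then show ?thesis by simp
  qed
  have sp0: "sp > 0" using spD D0 by linarith
  have num0: "0 \<le> R2 + s / 2" using s0 k0 by (simp add: R2_def)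
  have num: "R2 + s / 2 \<le> 2 * D\<^sup>2 + r * D / 2"
  proof -
    have "s \<le> r * D" unfolding srk using skD r0 by (simp add: mult_left_mono)
    then show ?thesis using kD by (simp add: R2_def)
  qed
  have b1: "\<beta> \<le> (R2 + s / 2) / (2 * D)"
    unfolding \<beta>_def using num0 spD D0 by (intro divide_left_mono) auto
  also have "\<dots> \<le> (2 * D\<^sup>2 + r * D / 2) / (2 * D)"
    using num D0 by (intro divide_right_mono) auto
  also have "\<dots> = D + r / 4" using D0 by (simp add: field_simps power2_eq_square)
  finally have bD: "\<beta> \<le> D + r / 4" .
  have b0: "0 \<le> \<beta>" unfolding \<beta>_def using num0 sp0 by simp
  have bsq: "\<beta>\<^sup>2 \<le> (D + r / 4)\<^sup>2" by (rule power_mono[OF bD b0])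
  have E: "D\<^sup>2 - \<beta>\<^sup>2 / 2 \<ge> - (u / 16)"
  proof -
    have "0 \<le> (D - r / 4)\<^sup>2" by simp
    moreover have "(D - r / 4)\<^sup>2 = D\<^sup>2 - D * r / 2 + r\<^sup>2 / 16" by (simp add: power2_eq_square field_simps)
    moreover have "(D + r / 4)\<^sup>2 = D\<^sup>2 + D * r / 2 + r\<^sup>2 / 16" by (simp add: power2_eq_square field_simps)
    ultimately show ?thesis using bsq ru by linarith
  qed
  have expE: "exp (- (u / 16)) \<le> exp (D\<^sup>2 - \<beta>\<^sup>2 / 2)" using E by simp
  have poly: "8 - u \<le> 9 * u * (1 - u / 8)"
  proof -
    have h: "0 \<le> (u - 8/9) * (8 - u)" using u1 u4 by (intro mult_nonneg_nonneg) auto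
    then show ?thesis by (simp add: algebra_simps field_simps)
  qed
  have e8: "1 - u / 8 \<le> exp (- (u / 8))" using exp_ge_add_one_self[of "- (u / 8)"] by simp
  have q1: "8 - u \<le> 9 * u * exp (- (u / 8))"
    using poly mult_left_mono[OF e8, of "9 * u"] u1 by linarith
  have q2: "(4 * R2 - s2) * k \<le> (8 * k - s2) * D\<^sup>2"
  proof -
    have "0 \<le> (4 * k - s2) * (D\<^sup>2 - k)" using sk4 kD by (intro mult_nonneg_nonneg) auto
    then show ?thesis by (simp add: R2_def algebra_simps)
  qed
  have q3: "(8 * k - s2) * D\<^sup>2 \<le> 9 * s2 * exp (- (u / 8)) * D\<^sup>2"
  proof -
    have "8 * k - s2 = (8 - u) * k" by (simp add: s2u algebra_simps)
    also have "\<dots> \<le> (9 * u * exp (- (u / 8))) * k" using q1 k0 by (intro mult_right_mono) auto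
    also have "\<dots> = 9 * s2 * exp (- (u / 8))" by (simp add: s2u)
    finally show ?thesis by (intro mult_right_mono) auto
  qed
  have expsq2: "exp (- (u / 16)) * exp (- (u / 16)) = exp (- (u / 8))"
    by (simp add: mult_exp_exp)
  have expsq: "(exp (- (u / 16)))\<^sup>2 = exp (- (u / 8))"
    using expsq2 by (simp add: power2_eq_square)
  have key: "sp * sqrt k \<le> 3 * s * D * exp (- (u / 16))"
  proof (rule power2_le_imp_le)
    have "(sp * sqrt k)\<^sup>2 = (4 * R2 - s2) * k" using k0 by (simp add: power_mult_distrib sp2)
    also have "\<dots> \<le> 9 * s2 * exp (- (u / 8)) * D\<^sup>2" using q2 q3 by linarith
    also have "\<dots> = (3 * s * D * exp (- (u / 16)))\<^sup>2"
      by (simp add: power_mult_distrib expsq2[symmetric] ss[symmetric] power2_eq_square)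
    finally show "(sp * sqrt k)\<^sup>2 \<le> (3 * s * D * exp (- (u / 16)))\<^sup>2" .
    show "0 \<le> 3 * s * D * exp (- (u / 16))" using s0 D0 by simp
  qed
  have c0: "3 \<le> (1 - 1 / sqrt (2 * pi)) * (4 * pi / sqrt (2 * pi))"
  proof -
    have sq: "sqrt (2 * pi) * sqrt (2 * pi) = 2 * pi" by simp
    have spi: "sqrt (2 * pi) > 0" by simp
    have "(1 - 1 / sqrt (2 * pi)) * (4 * pi / sqrt (2 * pi)) = 2 * sqrt (2 * pi) - 2"
      using spi sq by (simp add: field_simps)
    moreover have "5 / 2 \<le> sqrt (2 * pi)"
    proof -
      have "(5/2)\<^sup>2 \<le> 2 * pi" using pi_approx by (simp add: power2_eq_square)
      then have "sqrt ((5/2)\<^sup>2) \<le> sqrt (2 * pi)" by (rule real_sqrt_le_mono)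
      then show ?thesis by simp
    qed
    ultimately show ?thesis by simp
  qed
  have main: "sqrt k \<le> ((1 - 1 / sqrt (2 * pi)) * (s / sp) * std_normal_density \<beta>) * (4 * pi * D * exp (D\<^sup>2))"
  proof -
    have "sqrt k \<le> 3 * s * D * exp (- (u / 16)) / sp" using key sp0 by (simp add: field_simps)
    also have "\<dots> \<le> (1 - 1 / sqrt (2 * pi)) * (4 * pi / sqrt (2 * pi)) * s * D * exp (D\<^sup>2 - \<beta>\<^sup>2 / 2) / sp"
    proof -
      define C where "C = (1 - 1 / sqrt (2 * pi)) * (4 * pi / sqrt (2 * pi))"
      have "(3 * (s * D)) * exp (- (u / 16)) \<le> (C * (s * D)) * exp (D\<^sup>2 - \<beta>\<^sup>2 / 2)"
        using c0 expE s0 D0 unfolding C_def[symmetric] by (intro mult_mono mult_right_mono) auto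
      then have "3 * s * D * exp (- (u / 16)) / sp \<le> C * s * D * exp (D\<^sup>2 - \<beta>\<^sup>2 / 2) / sp"
        using sp0 by (intro divide_right_mono) (auto simp: mult.assoc)
      then show ?thesis by (simp add: C_def)
    qed
    also have "\<dots> = ((1 - 1 / sqrt (2 * pi)) * (s / sp) * std_normal_density \<beta>) * (4 * pi * D * exp (D\<^sup>2))"
    proof -
      have ee: "exp (D\<^sup>2 - \<beta>\<^sup>2 / 2) = exp (D\<^sup>2) * exp (- (\<beta>\<^sup>2 / 2))"
        by (simp add: mult_exp_exp)
      show ?thesis unfolding ee using sp0 by (simp add: std_normal_density_def field_simps)
    qed
    finally show ?thesis .
  qed
  have pos: "4 * pi * D * exp (D\<^sup>2) > 0" using D0 by simp
  have "sqrt k / (4 * pi * D) * exp (- (D\<^sup>2)) = sqrt k / (4 * pi * D * exp (D\<^sup>2))"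
    by (simp add: exp_minus field_simps)
  also have "\<dots> \<le> (1 - 1 / sqrt (2 * pi)) * (s / sp) * std_normal_density \<beta>"
    using main pos by (simp add: pos_divide_le_eq)
  finally show ?thesis by (simp add: s_def sp_def \<beta>_def R2_def)
qed


definition good_code :: "nat \<Rightarrow> 'a set set \<Rightarrow> bool" where
  "good_code m C \<longleftrightarrow> (\<forall>S\<in>C. \<forall>T\<in>C. S \<noteq> T \<longrightarrow> m < card ((S - T) \<union> (T - S)))"

lemma ball_card_le:
  assumes A: "finite A" and S: "S \<subseteq> A"
  shows "card {T. T \<subseteq> A \<and> card ((S - T) \<union> (T - S)) \<le> m} \<le> card {U. U \<subseteq> A \<and> card U \<le> m}"
proof (rule card_inj_on_le)
  show "inj_on (\<lambda>T. (S - T) \<union> (T - S)) {T. T \<subseteq> A \<and> card ((S - T) \<union> (T - S)) \<le> m}"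
    by (rule inj_onI) blast
  show "(\<lambda>T. (S - T) \<union> (T - S)) ` {T. T \<subseteq> A \<and> card ((S - T) \<union> (T - S)) \<le> m} \<subseteq> {U. U \<subseteq> A \<and> card U \<le> m}"
    using S by auto
  show "finite {U. U \<subseteq> A \<and> card U \<le> m}" using A by simp
qed

lemma vol_bound:
  assumes A: "finite A" and n: "card A = n" and mn: "m \<le> n"
  shows "card {U. U \<subseteq> A \<and> card U \<le> m} * 3 ^ (n - m) \<le> 4 ^ n"
proof -
  have "{U. U \<subseteq> A \<and> card U \<le> m} = (\<Union>i\<in>{..m}. {U. U \<subseteq> A \<and> card U = i})" by auto
  then have "card {U. U \<subseteq> A \<and> card U \<le> m} \<le> (\<Sum>i\<in>{..m}. card {U. U \<subseteq> A \<and> card U = i})"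
    by (simp add: card_UN_le)
  also have "\<dots> = (\<Sum>i\<in>{..m}. n choose i)" using n_subsets[OF A] n by simp
  finally have c1: "card {U. U \<subseteq> A \<and> card U \<le> m} \<le> (\<Sum>i\<in>{..m}. n choose i)" .
  have "card {U. U \<subseteq> A \<and> card U \<le> m} * 3 ^ (n - m) \<le> (\<Sum>i\<in>{..m}. n choose i) * 3 ^ (n - m)"
    using c1 by simp
  also have "\<dots> = (\<Sum>i\<in>{..m}. (n choose i) * 3 ^ (n - m))" by (simp add: sum_distrib_right)
  also have "\<dots> \<le> (\<Sum>i\<in>{..m}. (n choose i) * 3 ^ (n - i))"
    by (intro sum_mono mult_left_mono power_increasing) auto
  also have "\<dots> \<le> (\<Sum>i\<in>{..n}. (n choose i) * 3 ^ (n - i))"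
    using mn by (intro sum_mono2) auto
  also have "\<dots> = (1 + 3) ^ n"
  proof -
    have "(1 + 3 :: nat) ^ n = (\<Sum>k\<le>n. of_nat (n choose k) * 1 ^ k * 3 ^ (n - k))" by (rule binomial_ring)
    then show ?thesis by simp
  qed
  finally show ?thesis by simp
qed

lemma gv_code:
  fixes A :: "'a set" and n :: nat
  assumes A: "finite A" and n: "card A = n" and n1: "1 \<le> n"
  shows "\<exists>C. C \<subseteq> Pow A \<and> good_code ((n - 1) div 4) C \<and> exp (real n / 8) \<le> real (card C)"
proof -
  define m where "m = (n - 1) div 4"
  have m4: "4 * m < n" using n1 unfolding m_def by linarith
  have mn: "m \<le> n" using m4 by linarith
  define P where "P = (\<lambda>C. C \<subseteq> Pow A \<and> good_code m C)"
  have P0: "P {}" by (simp add: P_def good_code_def)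
  have Pb: "\<forall>C. P C \<longrightarrow> card C < card (Pow A) + 1"
  proof (intro allI impI)
    fix C assume "P C"
    then have "card C \<le> card (Pow A)" using A by (intro card_mono) (auto simp: P_def)
    then show "card C < card (Pow A) + 1" by simp
  qed
  obtain C where PC: "P C" and Cmax: "\<forall>C'. P C' \<longrightarrow> card C' \<le> card C"
    using ex_has_greatest_nat[OF P0 Pb] by blast
  have CP: "C \<subseteq> Pow A" and Cg: "good_code m C" using PC by (auto simp: P_def)
  have fC: "finite C" using CP A by (meson finite_Pow_iff finite_subset)
  have cover: "Pow A \<subseteq> (\<Union>S\<in>C. {T. T \<subseteq> A \<and> card ((S - T) \<union> (T - S)) \<le> m})"
  proof
    fix T assume T: "T \<in> Pow A"
    show "T \<in> (\<Union>S\<in>C. {T. T \<subseteq> A \<and> card ((S - T) \<union> (T - S)) \<le> m})"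
    proof (rule ccontr)
      assume nc: "T \<notin> (\<Union>S\<in>C. {T. T \<subseteq> A \<and> card ((S - T) \<union> (T - S)) \<le> m})"
      then have far: "\<forall>S\<in>C. m < card ((S - T) \<union> (T - S))" using T by auto
      have TC: "T \<notin> C" using far by auto
      have "P (insert T C)"
        unfolding P_def good_code_def
      proof (intro conjI ballI impI)
        show "insert T C \<subseteq> Pow A" using CP T by auto
        fix S1 S2 assume S1: "S1 \<in> insert T C" and S2: "S2 \<in> insert T C" and ne: "S1 \<noteq> S2"
        show "m < card ((S1 - S2) \<union> (S2 - S1))"
        proof -
          { assume "S1 = T" then have ?thesis using S2 ne far by (auto simp: Un_commute) }
          moreover { assume "S2 = T" then have ?thesis using S1 ne far by auto }
          moreover { assume "S1 \<in> C" "S2 \<in> C" then have ?thesis using Cg ne by (auto simp: good_code_def) }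
          ultimately show ?thesis using S1 S2 by blast
        qed
      qed
      then have "card (insert T C) \<le> card C" using Cmax by blast
      then show False using TC fC by simp
    qed
  qed
  define V where "V = card {U. U \<subseteq> A \<and> card U \<le> m}"
  have "2 ^ n = card (Pow A)" using A n by (simp add: card_Pow)
  also have "\<dots> \<le> card (\<Union>S\<in>C. {T. T \<subseteq> A \<and> card ((S - T) \<union> (T - S)) \<le> m})"
  proof (rule card_mono[OF _ cover])
    have "(\<Union>S\<in>C. {T. T \<subseteq> A \<and> card ((S - T) \<union> (T - S)) \<le> m}) \<subseteq> Pow A" by auto
    then show "finite (\<Union>S\<in>C. {T. T \<subseteq> A \<and> card ((S - T) \<union> (T - S)) \<le> m})"
      using A by (meson finite_Pow_iff finite_subset)
  qed
  also have "\<dots> \<le> (\<Sum>S\<in>C. card {T. T \<subseteq> A \<and> card ((S - T) \<union> (T - S)) \<le> m})"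
    using fC by (rule card_UN_le)
  also have "\<dots> \<le> (\<Sum>S\<in>C. V)"
    unfolding V_def using CP by (intro sum_mono ball_card_le[OF A]) auto
  also have "\<dots> = card C * V" by simp
  finally have cov: "2 ^ n \<le> card C * V" .
  have vb: "V * 3 ^ (n - m) \<le> 4 ^ n" unfolding V_def by (rule vol_bound[OF A n mn])
  have r1: "(2::real) ^ n \<le> real (card C) * real V"
  proof -
    have "real (2 ^ n) \<le> real (card C * V)" using cov by (simp only: of_nat_le_iff)
    then show ?thesis by simp
  qed
  have r2: "real V * 3 ^ (n - m) \<le> 4 ^ n"
  proof -
    have "real (V * 3 ^ (n - m)) \<le> real (4 ^ n)" using vb by (simp only: of_nat_le_iff)
    then show ?thesis by simp
  qed
  have r3: "(27::real) ^ n \<le> (3 ^ (n - m)) ^ 4"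
  proof -
    have "(27::real) ^ n = (3 ^ 3) ^ n" by simp
    also have "\<dots> = 3 ^ (3 * n)" by (simp only: power_mult)
    also have "\<dots> \<le> 3 ^ (4 * (n - m))" using m4 by (intro power_increasing) auto
    also have "\<dots> = (3 ^ (n - m)) ^ 4" by (simp only: power_mult[symmetric] mult.commute)
    finally show ?thesis .
  qed
  have V0: "0 \<le> real V" by simp
  have c4: "(16::real) ^ n * 27 ^ n \<le> (real (card C)) ^ 4 * 256 ^ n"
  proof -
    have p16: "((2::real) ^ n) ^ 4 = (2 ^ 4) ^ n" by (simp only: power_mult[symmetric] mult.commute)
    have "(16::real) ^ n * 27 ^ n = ((2::real) ^ n) ^ 4 * 27 ^ n" unfolding p16 by simp
    also have "\<dots> \<le> (real (card C) * real V) ^ 4 * 27 ^ n"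
      using r1 by (intro mult_right_mono power_mono) auto
    also have "\<dots> = (real (card C)) ^ 4 * ((real V) ^ 4 * 27 ^ n)" by (simp add: power_mult_distrib)
    also have "\<dots> \<le> (real (card C)) ^ 4 * ((real V) ^ 4 * (3 ^ (n - m)) ^ 4)"
      using r3 by (intro mult_left_mono) auto
    also have "\<dots> = (real (card C)) ^ 4 * (real V * 3 ^ (n - m)) ^ 4" by (simp add: power_mult_distrib)
    also have "\<dots> \<le> (real (card C)) ^ 4 * (4 ^ n) ^ 4"
      using r2 V0 by (intro mult_left_mono power_mono) auto
    also have "\<dots> = (real (card C)) ^ 4 * 256 ^ n"
    proof -
      have p4: "((4::real) ^ n) ^ 4 = (4 ^ 4) ^ n" by (simp only: power_mult[symmetric] mult.commute)
      show ?thesis unfolding p4 by simp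
    qed
    finally show ?thesis .
  qed
  have e: "exp (1/2 :: real) \<le> 27 / 16"
  proof -
    have "(exp (1/2 :: real)) ^ 2 = exp 1" by (simp add: power2_eq_square mult_exp_exp)
    also have "\<dots> \<le> (27/16) ^ 2"
    proof -
      have "(27/16::real) ^ 2 = 729/256" by (simp add: power2_eq_square)
      then show ?thesis using e_less_272 by simp
    qed
    finally show ?thesis by (rule power2_le_imp_le) simp
  qed
  have "(exp (real n / 8)) ^ 4 = exp (real 4 * (real n / 8))" by (rule exp_of_nat_mult[symmetric])
  also have "\<dots> = exp (real n * (1/2))" by simp
  also have "\<dots> = (exp (1/2)) ^ n" by (rule exp_of_nat_mult)
  also have "\<dots> \<le> (27 / 16) ^ n" using e by (intro power_mono) auto
  also have "\<dots> \<le> (real (card C)) ^ 4"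
  proof -
    have "(27 / 16 :: real) ^ n * 256 ^ n = (27 / 16 * 256) ^ n"
      by (simp only: power_mult_distrib)
    also have "\<dots> = (16 * 27) ^ n" by simp
    also have "\<dots> = 16 ^ n * 27 ^ n" by (simp only: power_mult_distrib)
    finally have "(27 / 16 :: real) ^ n * 256 ^ n = 16 ^ n * 27 ^ n" .
    then have "(27 / 16 :: real) ^ n * 256 ^ n \<le> (real (card C)) ^ 4 * 256 ^ n" using c4 by simp
    then show ?thesis by simp
  qed
  finally have "(exp (real n / 8)) ^ 4 \<le> (real (card C)) ^ 4" .
  then have "exp (real n / 8) \<le> real (card C)"
    using power_le_imp_le_base[of "exp (real n / 8)" 3 "real (card C)"] by simp
  then show ?thesis using CP Cg unfolding m_def by blast
qed


theorem lemma3: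
  fixes M :: "'a measure" and I :: "(real \<Rightarrow> real) \<Rightarrow> 'a \<Rightarrow> real"
    and \<phi> :: "nat \<Rightarrow> real \<Rightarrow> real" and d :: nat and \<epsilon> \<Delta> :: real
  assumes "ONB_01 \<phi>" and "wiener_integral M I"
    and "d \<ge> 7" and "\<epsilon> > 0" and "\<Delta> \<ge> sqrt (real d) * \<epsilon>"
  shows "\<exists>\<Theta>. \<Theta> \<subseteq> cube_set d \<Delta> \<epsilon> \<and> finite \<Theta> \<and>
           real (card \<Theta>) \<ge> exp ((real d - 1) / 8) \<and> exp ((real d - 1) / 8) \<ge> 2 \<and>
           (\<forall>\<theta>\<in>\<Theta>. \<forall>\<theta>'\<in>\<Theta>. \<theta> \<noteq> \<theta>' \<longrightarrow>
              L1_Q0_dist M \<phi> d I \<theta> \<theta>' \<ge>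
                sqrt (real d - 1) * \<epsilon> / (4 * pi * \<Delta>) * exp (- (\<Delta>\<^sup>2)))"
proof -
  note ONB = assms(1) and W = assms(2) and d7 = assms(3) and e0 = assms(4) and De = assms(5)
  define n where "n = d - 1"
  define A where "A = {2..d}"
  have An: "card A = n" by (simp add: A_def n_def)
  have fA: "finite A" by (simp add: A_def)
  have n6: "n \<ge> 6" using d7 by (simp add: n_def)
  have rn: "real n = real d - 1" using d7 by (simp add: n_def)
  obtain C where CP: "C \<subseteq> Pow A" and Cg: "good_code ((n - 1) div 4) C" and Cc: "exp (real n / 8) \<le> real (card C)"
    using gv_code[OF fA An] n6 by auto
  define m where "m = (n - 1) div 4"
  have m4: "n \<le> 4 * (m + 1)" using n6 unfolding m_def by presburger
  define th where "th = (\<lambda>S j. if j = 1 then \<Delta> else if j \<in> A then (if j \<in> S then \<epsilon> else - \<epsilon>) else (0::real))"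
  define \<Theta> where "\<Theta> = th ` C"
  have fC: "finite C" using CP fA by (meson finite_Pow_iff finite_subset)
  have inj: "inj_on th (Pow A)"
  proof (rule inj_onI)
    fix S T assume S: "S \<in> Pow A" and T: "T \<in> Pow A" and eq: "th S = th T"
    show "S = T"
    proof (rule set_eqI)
      fix j
      show "j \<in> S \<longleftrightarrow> j \<in> T"
      proof (cases "j \<in> A")
        case True
        then have j1: "j \<noteq> 1" by (simp add: A_def)
        have "th S j = th T j" using eq by simp
        then show ?thesis using True j1 e0 by (auto simp: th_def split: if_splits)
      next
        case False
        then show ?thesis using S T by auto
      qed
    qed
  qed
  have cardT: "card \<Theta> = card C" unfolding \<Theta>_def using inj CP by (intro card_image) (rule inj_on_subset)
  have sub: "\<Theta> \<subseteq> cube_set d \<Delta> \<epsilon>"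
    unfolding \<Theta>_def cube_set_def th_def A_def using d7 by auto
  have e2: "exp ((real d - 1) / 8) \<ge> 2"
  proof -
    have "(3/4::real) \<le> (real d - 1) / 8" using d7 by simp
    then have m: "exp (3/4::real) \<le> exp ((real d - 1) / 8)" by (simp only: exp_le_cancel_iff)
    have t: "1 + 3/4 + (3/4)\<^sup>2 / 2 \<le> exp (3/4::real)" by (rule exp_lower_Taylor_quadratic) simp
    have "(1 + 3/4 + (3/4)\<^sup>2 / 2 :: real) = 65/32" by (simp add: power2_eq_square)
    then show ?thesis using m t by linarith
  qed
  have "sqrt (real d) * \<epsilon> > 0" using e0 d7 by simp
  then have D0: "\<Delta> > 0" using De by linarith
  have kD: "real n * \<epsilon>\<^sup>2 \<le> \<Delta>\<^sup>2"
  proof -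
    have "(sqrt (real d) * \<epsilon>)\<^sup>2 \<le> \<Delta>\<^sup>2" using De e0 by (intro power_mono) auto
    then have "real d * \<epsilon>\<^sup>2 \<le> \<Delta>\<^sup>2" by (simp add: power_mult_distrib)
    moreover have "real n * \<epsilon>\<^sup>2 \<le> real d * \<epsilon>\<^sup>2" using rn by (intro mult_right_mono) auto
    ultimately show ?thesis by linarith
  qed
  have sqn: "sqnorm d (th S) = \<Delta>\<^sup>2 + real n * \<epsilon>\<^sup>2" for S
  proof -
    have "{1..d} = insert 1 A" using d7 by (auto simp: A_def)
    then have "sqnorm d (th S) = (th S 1)\<^sup>2 + (\<Sum>j\<in>A. (th S j)\<^sup>2)"
      unfolding sqnorm_def by (simp add: A_def)
    also have "(\<Sum>j\<in>A. (th S j)\<^sup>2) = (\<Sum>j\<in>A. \<epsilon>\<^sup>2)"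
      by (intro sum.cong) (auto simp: th_def A_def)
    finally show ?thesis using An by (simp add: th_def)
  qed
  have dist: "(\<Sum>j=1..d. (th S j - th T j)\<^sup>2) = 4 * \<epsilon>\<^sup>2 * real (card ((S - T) \<union> (T - S)))"
    if "S \<subseteq> A" "T \<subseteq> A" for S T
  proof -
    have "{1..d} = insert 1 A" using d7 by (auto simp: A_def)
    then have "(\<Sum>j=1..d. (th S j - th T j)\<^sup>2) = (th S 1 - th T 1)\<^sup>2 + (\<Sum>j\<in>A. (th S j - th T j)\<^sup>2)"
      by (simp add: A_def)
    also have "(\<Sum>j\<in>A. (th S j - th T j)\<^sup>2) = (\<Sum>j\<in>A. if j \<in> (S - T) \<union> (T - S) then 4 * \<epsilon>\<^sup>2 else 0)"
      by (intro sum.cong) (auto simp: th_def A_def power2_eq_square)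
    also have "\<dots> = (\<Sum>j\<in>A \<inter> ((S - T) \<union> (T - S)). 4 * \<epsilon>\<^sup>2)"
      by (rule sum.inter_restrict[OF fA, symmetric])
    also have "A \<inter> ((S - T) \<union> (T - S)) = (S - T) \<union> (T - S)" using that by auto
    finally show ?thesis by (simp add: th_def)
  qed
  have pair: "L1_Q0_dist M \<phi> d I \<theta> \<theta>' \<ge> sqrt (real d - 1) * \<epsilon> / (4 * pi * \<Delta>) * exp (- (\<Delta>\<^sup>2))"
    if tin: "\<theta> \<in> \<Theta>" "\<theta>' \<in> \<Theta>" "\<theta> \<noteq> \<theta>'" for \<theta> \<theta>'
  proof -
    obtain S where S: "S \<in> C" and tS: "\<theta> = th S" using tin(1) unfolding \<Theta>_def by blast
    obtain T where T: "T \<in> C" and tT: "\<theta>' = th T" using tin(2) unfolding \<Theta>_def by blast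
    have ST: "S \<noteq> T" using tin(3) tS tT by auto
    define h where "h = card ((S - T) \<union> (T - S))"
    have hm: "m < h" using Cg S T ST by (auto simp: good_code_def h_def m_def)
    have hn: "h \<le> n"
    proof -
      have "(S - T) \<union> (T - S) \<subseteq> A" using S T CP by auto
      then have "card ((S - T) \<union> (T - S)) \<le> card A" by (rule card_mono[OF fA])
      then show ?thesis unfolding h_def using An by simp
    qed
    define k where "k = real n * \<epsilon>\<^sup>2"
    define s2 where "s2 = 4 * \<epsilon>\<^sup>2 * real h"
    have k0: "0 < k" using n6 e0 by (simp add: k_def)
    have ks: "k \<le> s2"
    proof -
      have "n \<le> 4 * h" using m4 hm by presburger
      then have "real n \<le> 4 * real h" by linarith
      then show ?thesis using e0 by (simp add: k_def s2_def)
    qed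
    have sk4: "s2 \<le> 4 * k" using hn e0 by (simp add: k_def s2_def)
    have L: "L1_Q0_dist M \<phi> d I \<theta> \<theta>' \<ge> (1 - 1 / sqrt (2 * pi)) * (sqrt s2 / sqrt (4 * (\<Delta>\<^sup>2 + k) - s2))
            * std_normal_density ((\<Delta>\<^sup>2 + k + sqrt s2 / 2) / sqrt (4 * (\<Delta>\<^sup>2 + k) - s2))"
    proof (rule L1_lower[OF ONB W])
      show "sqnorm d \<theta> = \<Delta>\<^sup>2 + k" "sqnorm d \<theta>' = \<Delta>\<^sup>2 + k" unfolding tS tT sqn k_def by simp_all
      show "(\<Sum>j=1..d. (\<theta> j - \<theta>' j)\<^sup>2) = s2" unfolding tS tT s2_def h_def using S T CP by (intro dist) auto
      show "s2 > 0" using k0 ks by linarith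
      have "0 < \<Delta>\<^sup>2" using D0 by simp
      then show "4 * (\<Delta>\<^sup>2 + k) - s2 > 0" using sk4 by (smt (verit))
    qed
    have F: "sqrt k / (4 * pi * \<Delta>) * exp (- (\<Delta>\<^sup>2)) \<le> (1 - 1 / sqrt (2 * pi)) * (sqrt s2 / sqrt (4 * (\<Delta>\<^sup>2 + k) - s2))
            * std_normal_density ((\<Delta>\<^sup>2 + k + sqrt s2 / 2) / sqrt (4 * (\<Delta>\<^sup>2 + k) - s2))"
      by (rule final_ineq[OF D0 k0 _ ks sk4]) (use kD in \<open>simp add: k_def\<close>)
    have "sqrt k = sqrt (real d - 1) * \<epsilon>" using e0 rn by (simp add: k_def real_sqrt_mult)
    then show ?thesis using F L by simp
  qed
  show ?thesis
    using sub fC cardT Cc rn e2 pair unfolding \<Theta>_def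
    by (intro exI[of _ "th ` C"]) auto
qed
end
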